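(* Let $m\ge1$ and let $X\subset\sqrt{m}\,\mathbb{S}^{m-1}$ be a spherical $2$-design with $|X|=n$ which is an $s$-distance set of degree $S=s$. If $\frac1n q_i((nG)^\circ)=F_i$ for all $i\in\{0,1,\dots,s\}$, then $X$ carries a $Q$-polynomial association scheme; namely $X$ has the structure of a $Q$-polynomial association scheme with respect to the idempotents $F_0,\dots,F_s$.
   Context: $\sqrt{m}\,\mathbb{S}^{m-1}=\{\bm x\in\mathbb{R}^m:\bm x\cdot\bm x=m\}$. $A(X)=\{\bm x\cdot\bm y:\bm x\ne\bm y\in X\}$, $A'(X)=A(X)\cup\{m\}$; $s$-distance set: $|A(X)|=s$. Spherical $2$-design: the average over $X$ of every polynomial of degree $\le2$ equals its average over the sphere. $C(X)$: real functions on $X$ with $(f,g)=\frac1n\sum f g$; $\zeta_{\bm a}(p)(\bm x)=p(\bm a\cdot\bm x)$; $\mathrm{Pol}_0$ = constants, $\mathrm{Pol}_1=\mathrm{Span}\{\zeta_{\bm a}(p):\deg p\le1\}$, $\mathrm{Pol}_k=\mathrm{Span}\{fg:f\in\mathrm{Pol}_1,g\in\mathrm{Pol}_{k-1}\}$; degree $S=\min\{i:\mathrm{Pol}_i(X)=C(X)\}$; $\mathrm{Harm}_0=\mathrm{Pol}_0$, $\mathrm{Harm}_k=\mathrm{Pol}_k\cap\mathrm{Pol}_{k-1}^\perp$; $F_i$ ($0\le i\le S$) is the matrix of the orthogonal projection onto $\mathrm{Harm}_i(X)$, with $(Mf)(\bm x)=\sum_{\bm y}M_{\bm x,\bm y}f(\bm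 y)$. $G=\frac1n(\bm x\cdot\bm y)_{\bm x,\bm y}$; $p(M^\circ)$ is entrywise application of $p$. $\kappa_\alpha=|\{(\bm x,\bm y)\in X^2:\bm x\cdot\bm y=\alpha\}|$, $\langle p,q\rangle=\frac1{n^2}\sum_{\alpha\in A'(X)}\kappa_\alpha p(\alpha)q(\alpha)$; predegree polynomials $q_0,\dots,q_s$: $\deg q_k=k$, $\langle q_k,q_h\rangle=\delta_{k,h}q_k(m)$. With $R_\alpha=\{(\bm x,\bm y):\bm x\cdot\bm y=\alpha\}$, "$X$ has the structure of a $Q$-polynomial association scheme with respect to the idempotents $F_0,\dots,F_s$" means $(X,\{R_\alpha\}_{\alpha\in A'(X)})$ is a symmetric association scheme (the span of the adjacency matrices of the $R_\alpha$ is closed under matrix multiplication, with the standard axioms) whose primitive idempotents are $F_0,\dots,F_s$, and for each $i$ there is a polynomial $v_i^*$ of degree $i$ with $nF_i=v_i^*((nF_1)^\circ)$. *)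

theory Defs
  imports "HOL-Analysis.Analysis" "HOL-Computational_Algebra.Polynomial"
begin

text \<open>Functions on a finite set X of points, represented as total functions that
  vanish outside X (the space C(X)).  Matrices indexed by X are functions
  'a => 'a => real, of which only the entries on X x X are relevant.\<close>

definition onX :: "'a set \<Rightarrow> ('a \<Rightarrow> real) \<Rightarrow> ('a \<Rightarrow> real)" where
  "onX X f = (\<lambda>x. if x \<in> X then f x else 0)"

definition CX :: "'a set \<Rightarrow> ('a \<Rightarrow> real) set" where
  "CX X = {f. \<forall>x. x \<notin> X \<longrightarrow> f x = 0}"

definition lin_span :: "'a set \<Rightarrow> ('a \<Rightarrow> real) set \<Rightarrow> ('a \<Rightarrow> real) set" where
  "lin_span X F = {onX X (\<lambda>x. \<Sum>i<k. c i * g i x) | (k::nat) c g. \<forall>i<k. g i \<in> F}"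

definition ipX :: "'a set \<Rightarrow> ('a \<Rightarrow> real) \<Rightarrow> ('a \<Rightarrow> real) \<Rightarrow> real" where
  "ipX X f g = (1 / real (card X)) * (\<Sum>x\<in>X. f x * g x)"

definition zeta :: "'a::real_inner \<Rightarrow> real poly \<Rightarrow> 'a \<Rightarrow> real" where
  "zeta a p = (\<lambda>x. poly p (a \<bullet> x))"

fun Pol :: "'a::real_inner set \<Rightarrow> nat \<Rightarrow> ('a \<Rightarrow> real) set" where
  "Pol X 0 = lin_span X {\<lambda>x. 1}"
| "Pol X (Suc 0) = lin_span X {zeta a p | a p. degree p \<le> 1}"
| "Pol X (Suc (Suc k)) =
     lin_span X {(\<lambda>x. f x * g x) | f g. f \<in> Pol X (Suc 0) \<and> g \<in> Pol X (Suc k)}"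

fun Harm :: "'a::real_inner set \<Rightarrow> nat \<Rightarrow> ('a \<Rightarrow> real) set" where
  "Harm X 0 = Pol X 0"
| "Harm X (Suc k) = {f \<in> Pol X (Suc k). \<forall>g \<in> Pol X k. ipX X f g = 0}"

definition design_degree :: "'a::real_inner set \<Rightarrow> nat" where
  "design_degree X = (LEAST i. Pol X i = CX X)"

definition matvec :: "'a set \<Rightarrow> ('a \<Rightarrow> 'a \<Rightarrow> real) \<Rightarrow> ('a \<Rightarrow> real) \<Rightarrow> ('a \<Rightarrow> real)" where
  "matvec X M f = onX X (\<lambda>x. \<Sum>y\<in>X. M x y * f y)"

definition proj_mat :: "'a set \<Rightarrow> ('a \<Rightarrow> real) set \<Rightarrow> ('a \<Rightarrow> 'a \<Rightarrow> real)" where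
  "proj_mat X H = (THE M. (\<forall>x y. \<not> (x \<in> X \<and> y \<in> X) \<longrightarrow> M x y = 0) \<and>
      (\<forall>f \<in> CX X. matvec X M f \<in> H \<and>
          (\<forall>h \<in> H. ipX X (\<lambda>x. f x - matvec X M f x) h = 0)))"

definition Fmat :: "'a::real_inner set \<Rightarrow> nat \<Rightarrow> ('a \<Rightarrow> 'a \<Rightarrow> real)" where
  "Fmat X i = proj_mat X (Harm X i)"

definition on_sphere :: "'a::euclidean_space set \<Rightarrow> bool" where
  "on_sphere X \<longleftrightarrow> (\<forall>x\<in>X. x \<bullet> x = real DIM('a))"

text \<open>Spherical 2-design on the sphere of radius sqrt m: the averages over X of
  all polynomials of degree <= 2 equal the sphere averages.  The sphere averages
  of 1, of the linear forms a.x, and of the quadratic forms (a.x)(b.x) on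
  sqrt(m) S^(m-1) are 1, 0 and a.b respectively, so the condition reads:\<close>
definition design2 :: "'a::euclidean_space set \<Rightarrow> bool" where
  "design2 X \<longleftrightarrow>
     (\<forall>a. (1 / real (card X)) * (\<Sum>x\<in>X. a \<bullet> x) = 0) \<and>
     (\<forall>a b. (1 / real (card X)) * (\<Sum>x\<in>X. (a \<bullet> x) * (b \<bullet> x)) = a \<bullet> b)"

definition Aset :: "'a::real_inner set \<Rightarrow> real set" where
  "Aset X = {x \<bullet> y | x y. x \<in> X \<and> y \<in> X \<and> x \<noteq> y}"

definition Aset' :: "'a::euclidean_space set \<Rightarrow> real set" where
  "Aset' X = insert (real DIM('a)) (Aset X)"

definition kappa :: "'a::real_inner set \<Rightarrow> real \<Rightarrow> nat" where
  "kappa X \<alpha> = card {(x, y). x \<in> X \<and> y \<in> X \<and> x \<bullet> y = \<alpha>}"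

definition pre_ip :: "'a::euclidean_space set \<Rightarrow> real poly \<Rightarrow> real poly \<Rightarrow> real" where
  "pre_ip X p q = (1 / (real (card X))^2) *
     (\<Sum>\<alpha>\<in>Aset' X. real (kappa X \<alpha>) * poly p \<alpha> * poly q \<alpha>)"

definition predegree_polys :: "'a::euclidean_space set \<Rightarrow> nat \<Rightarrow> (nat \<Rightarrow> real poly) \<Rightarrow> bool" where
  "predegree_polys X s q \<longleftrightarrow>
     (\<forall>k\<le>s. degree (q k) = k) \<and>
     (\<forall>k\<le>s. \<forall>h\<le>s. pre_ip X (q k) (q h) =
         (if k = h then poly (q k) (real DIM('a)) else 0))"

definition matmul :: "'a set \<Rightarrow> ('a \<Rightarrow> 'a \<Rightarrow> real) \<Rightarrow> ('a \<Rightarrow> 'a \<Rightarrow> real) \<Rightarrow> ('a \<Rightarrow> 'a \<Rightarrow> real)" where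
  "matmul X M N = (\<lambda>x y. \<Sum>z\<in>X. M x z * N z y)"

definition adj :: "('a \<times> 'a) set \<Rightarrow> 'a \<Rightarrow> 'a \<Rightarrow> real" where
  "adj R x y = (if (x, y) \<in> R then 1 else 0)"

definition sym_assoc_scheme :: "'a set \<Rightarrow> 'i set \<Rightarrow> ('i \<Rightarrow> ('a \<times> 'a) set) \<Rightarrow> bool" where
  "sym_assoc_scheme X I R \<longleftrightarrow>
     finite X \<and> finite I \<and>
     (\<forall>i\<in>I. R i \<noteq> {} \<and> R i \<subseteq> X \<times> X) \<and>
     (\<forall>i\<in>I. \<forall>j\<in>I. i \<noteq> j \<longrightarrow> R i \<inter> R j = {}) \<and>
     (\<Union>i\<in>I. R i) = X \<times> X \<and>
     (\<exists>i0\<in>I. R i0 = Id_on X) \<and>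
     (\<forall>i\<in>I. converse (R i) = R i) \<and>
     (\<forall>i\<in>I. \<forall>j\<in>I. \<forall>k\<in>I. \<exists>p::nat. \<forall>(x, y)\<in>R k.
         card {z\<in>X. (x, z) \<in> R i \<and> (z, y) \<in> R j} = p)"

definition primitive_idempotents ::
  "'a set \<Rightarrow> 'i set \<Rightarrow> ('i \<Rightarrow> ('a \<times> 'a) set) \<Rightarrow> (nat \<Rightarrow> 'a \<Rightarrow> 'a \<Rightarrow> real) \<Rightarrow> nat \<Rightarrow> bool" where
  "primitive_idempotents X I R F s \<longleftrightarrow>
     (\<forall>i\<le>s. \<exists>c. \<forall>x\<in>X. \<forall>y\<in>X. F i x y = (\<Sum>\<alpha>\<in>I. c \<alpha> * adj (R \<alpha>) x y)) \<and>
     (\<forall>i\<le>s. \<exists>x\<in>X. \<exists>y\<in>X. F i x y \<noteq> 0) \<and>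
     (\<forall>i\<le>s. \<forall>j\<le>s. \<forall>x\<in>X. \<forall>y\<in>X.
         matmul X (F i) (F j) x y = (if i = j then F i x y else 0)) \<and>
     (\<forall>x\<in>X. \<forall>y\<in>X. (\<Sum>i\<le>s. F i x y) = (if x = y then 1 else 0)) \<and>
     (\<forall>\<alpha>\<in>I. \<exists>c. \<forall>x\<in>X. \<forall>y\<in>X. adj (R \<alpha>) x y = (\<Sum>i\<le>s. c i * F i x y))"

definition Q_poly_scheme :: "'a::euclidean_space set \<Rightarrow> (nat \<Rightarrow> 'a \<Rightarrow> 'a \<Rightarrow> real) \<Rightarrow> nat \<Rightarrow> bool" where
  "Q_poly_scheme X F s \<longleftrightarrow>
     (let R = (\<lambda>\<alpha>. {(x, y). x \<in> X \<and> y \<in> X \<and> x \<bullet> y = \<alpha>}); n = real (card X) in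
       sym_assoc_scheme X (Aset' X) R \<and>
       primitive_idempotents X (Aset' X) R F s \<and>
       (\<forall>i\<le>s. \<exists>v::real poly. degree v = i \<and>
          (\<forall>x\<in>X. \<forall>y\<in>X. n * F i x y = poly v (n * F 1 x y))))"

end

theory Submission imports Defs "HOL-Library.Function_Algebras" begin


global_interpretation fv: vector_space "\<lambda>(c::real) (f::'a\<Rightarrow>real) x. c * f x"
  by unfold_locales (auto simp: fun_eq_iff algebra_simps)

definition sp :: "'a set \<Rightarrow> ('a\<Rightarrow>real) \<Rightarrow> ('a\<Rightarrow>real) \<Rightarrow> real" where
  "sp X f g = (\<Sum>x\<in>X. f x * g x)"

lemma sp_comm: "sp X f g = sp X g f" by (simp add: sp_def mult.commute)
lemma sp_add_right: "sp X f (\<lambda>x. g x + h x) = sp X f g + sp X f h"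
  by (simp add: sp_def distrib_left sum.distrib)
lemma sp_diff_right: "sp X f (\<lambda>x. g x - h x) = sp X f g - sp X f h"
  by (simp add: sp_def right_diff_distrib sum_subtractf)
lemma sp_scale_right: "sp X f (\<lambda>x. c * g x) = c * sp X f g"
  by (simp add: sp_def sum_distrib_left algebra_simps)
lemma sp_add_left: "sp X (\<lambda>x. g x + h x) f = sp X g f + sp X h f"
  by (simp add: sp_def distrib_right sum.distrib)
lemma sp_diff_left: "sp X (\<lambda>x. g x - h x) f = sp X g f - sp X h f"
  by (simp add: sp_def left_diff_distrib sum_subtractf)
lemma sp_scale_left: "sp X (\<lambda>x. c * g x) f = c * sp X g f"
  by (simp add: sp_def sum_distrib_left algebra_simps)

lemma sp_self_zero: "finite X \<Longrightarrow> sp X f f = 0 \<Longrightarrow> x \<in> X \<Longrightarrow> f x = 0"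
  unfolding sp_def using sum_nonneg_eq_0_iff[of X "\<lambda>x. f x * f x"] by auto

lemma ipX_zero_iff: "finite X \<Longrightarrow> X \<noteq> {} \<Longrightarrow> ipX X f g = 0 \<longleftrightarrow> sp X f g = 0"
  by (simp add: ipX_def sp_def)

definition isproj :: "'a set \<Rightarrow> ('a \<Rightarrow> real) set \<Rightarrow> ('a \<Rightarrow> 'a \<Rightarrow> real) \<Rightarrow> bool" where
  "isproj X H M \<longleftrightarrow> (\<forall>x y. \<not> (x \<in> X \<and> y \<in> X) \<longrightarrow> M x y = 0) \<and>
      (\<forall>f \<in> CX X. matvec X M f \<in> H \<and>
          (\<forall>h \<in> H. ipX X (\<lambda>x. f x - matvec X M f x) h = 0))"

lemma proj_mat_THE: "proj_mat X H = (THE M. isproj X H M)"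
  unfolding proj_mat_def isproj_def ..

lemma isproj_sp:
  assumes "finite X" "X \<noteq> {}"
  shows "isproj X H M \<longleftrightarrow> (\<forall>x y. \<not> (x \<in> X \<and> y \<in> X) \<longrightarrow> M x y = 0) \<and>
      (\<forall>f \<in> CX X. matvec X M f \<in> H \<and>
          (\<forall>h \<in> H. sp X (\<lambda>x. f x - matvec X M f x) h = 0))"
  unfolding isproj_def using ipX_zero_iff[OF assms] by simp

lemma matvec_CX: "matvec X M f \<in> CX X"
  by (simp add: matvec_def onX_def CX_def)

lemma onX_CX: "onX X f \<in> CX X"
  by (simp add: onX_def CX_def)

definition delta :: "'a \<Rightarrow> 'a \<Rightarrow> real" where "delta b = (\<lambda>x. if x = b then 1 else 0)"

lemma delta_CX: "b \<in> X \<Longrightarrow> delta b \<in> CX X" by (simp add: delta_def CX_def)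

lemma matvec_delta: "finite X \<Longrightarrow> b \<in> X \<Longrightarrow> matvec X M (delta b) x = (if x \<in> X then M x b else 0)"
  by (simp add: matvec_def onX_def delta_def if_distrib[of "\<lambda>t. _ * t"] sum.delta' cong: if_cong)

lemma fun_diff_app: "((f::'a\<Rightarrow>real) - g) = (\<lambda>x. f x - g x)" by (simp add: fun_eq_iff)

lemma isproj_zero: "isproj X H M \<Longrightarrow> \<not> (x \<in> X \<and> y \<in> X) \<Longrightarrow> M x y = 0"
  unfolding isproj_def by blast
lemma isproj_in: "isproj X H M \<Longrightarrow> f \<in> CX X \<Longrightarrow> matvec X M f \<in> H"
  unfolding isproj_def by blast
lemma isproj_orth: "finite X \<Longrightarrow> X \<noteq> {} \<Longrightarrow> isproj X H M \<Longrightarrow> f \<in> CX X \<Longrightarrow> h \<in> H \<Longrightarrow>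
   sp X (\<lambda>x. f x - matvec X M f x) h = 0"
  unfolding isproj_sp by blast

lemma isproj_unique:
  assumes X: "finite X" "X \<noteq> {}" and H: "fv.subspace H"
    and M: "isproj X H M" and M': "isproj X H M'"
  shows "M = M'"
proof (intro ext)
  fix a b
  show "M a b = M' a b"
  proof (cases "a \<in> X \<and> b \<in> X")
    case False
    then show ?thesis using isproj_zero[OF M] isproj_zero[OF M'] by simp
  next
    case True
    let ?e = "delta b"
    have e: "?e \<in> CX X" using delta_CX[of b X] True by simp
    define d where "d = (\<lambda>x. matvec X M ?e x - matvec X M' ?e x)"
    have "matvec X M ?e - matvec X M' ?e \<in> H"
      using isproj_in[OF M e] isproj_in[OF M' e] H by (rule_tac fv.subspace_diff)
    then have dH: "d \<in> H" unfolding d_def fun_diff_app .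
    have 1: "sp X (\<lambda>x. ?e x - matvec X M ?e x) d = 0"
      using isproj_orth[OF X M e dH] .
    have 2: "sp X (\<lambda>x. ?e x - matvec X M' ?e x) d = 0"
      using isproj_orth[OF X M' e dH] .
    have dD: "d = (\<lambda>x. (?e x - matvec X M' ?e x) - (?e x - matvec X M ?e x))"
      unfolding d_def by (simp add: fun_eq_iff)
    have "sp X (\<lambda>x. (?e x - matvec X M' ?e x) - (?e x - matvec X M ?e x)) d
       = sp X (\<lambda>x. ?e x - matvec X M' ?e x) d - sp X (\<lambda>x. ?e x - matvec X M ?e x) d"
      by (rule sp_diff_left)
    then have "sp X d d = sp X (\<lambda>x. ?e x - matvec X M' ?e x) d - sp X (\<lambda>x. ?e x - matvec X M ?e x) d"
      unfolding dD[symmetric] .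
    then have "sp X d d = 0" using 1 2 by simp
    then have "d a = 0" using sp_self_zero[OF X(1)] True by blast
    then show ?thesis using True matvec_delta[OF X(1)] unfolding d_def by simp
  qed
qed

lemma isproj_fix:
  assumes X: "finite X" "X \<noteq> {}" and H: "fv.subspace H" "H \<subseteq> CX X"
    and M: "isproj X H M" and h: "h \<in> H"
  shows "matvec X M h = h"
proof -
  have hC: "h \<in> CX X" using h H by auto
  define d where "d = (\<lambda>x. matvec X M h x - h x)"
  have "matvec X M h - h \<in> H" using isproj_in[OF M hC] h H(1) by (rule_tac fv.subspace_diff)
  then have dH: "d \<in> H" unfolding d_def fun_diff_app .
  have 1: "sp X (\<lambda>x. h x - matvec X M h x) d = 0"
    using isproj_orth[OF X M hC dH] .
  have "(\<lambda>x. h x - matvec X M h x) = (\<lambda>x. (-1) * d x)"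
    unfolding d_def by (simp add: fun_eq_iff)
  then have "sp X (\<lambda>x. h x - matvec X M h x) d = (-1) * sp X d d"
    using sp_scale_left[of X "-1" d d] by simp
  then have "sp X d d = - sp X (\<lambda>x. h x - matvec X M h x) d" by simp
  then have "sp X d d = 0" using 1 by simp
  then have d0: "\<forall>x\<in>X. d x = 0" using sp_self_zero[OF X(1)] by blast
  show ?thesis
  proof
    fix x show "matvec X M h x = h x"
    proof (cases "x \<in> X")
      case True then show ?thesis using d0 unfolding d_def by simp
    next
      case False then show ?thesis using hC by (simp add: matvec_def onX_def CX_def)
    qed
  qed
qed

lemma isproj_kill:
  assumes X: "finite X" "X \<noteq> {}"
    and M: "isproj X H M" and f: "f \<in> CX X" and orth: "\<forall>h\<in>H. sp X f h = 0"
  shows "matvec X M f = 0"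
proof -
  let ?d = "matvec X M f"
  have dH: "?d \<in> H" using isproj_in[OF M f] .
  have 1: "sp X (\<lambda>x. f x - ?d x) ?d = 0"
    using isproj_orth[OF X M f dH] .
  have "sp X ?d ?d = sp X f ?d - sp X (\<lambda>x. f x - ?d x) ?d"
    unfolding sp_diff_left by simp
  then have "sp X ?d ?d = 0" using 1 orth dH by simp
  then have "\<forall>x\<in>X. ?d x = 0" using sp_self_zero[OF X(1)] by blast
  then show ?thesis by (auto simp: fun_eq_iff matvec_def onX_def)
qed


lemma sum_split_add: "(\<Sum>i<k1+(k2::nat). h i) = (\<Sum>i<k1. h i) + (\<Sum>i<k2. h (k1+i)::real)"
  by (induction k2) (auto simp: add.assoc)

lemma sum_fun_app: "(\<Sum>y\<in>A. (F y :: 'a \<Rightarrow> real)) x = (\<Sum>y\<in>A. F y x)"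
  by (induction A rule: infinite_finite_induct) auto

lemma lin_span_CX: "lin_span X F \<subseteq> CX X"
  unfolding lin_span_def by (auto simp: onX_CX)

lemma lin_span_single: "g \<in> F \<Longrightarrow> onX X g \<in> lin_span X F"
  unfolding lin_span_def
  by (rule CollectI, rule exI[of _ 1], rule exI[of _ "\<lambda>_. 1"], rule exI[of _ "\<lambda>_. g"]) simp

lemma lin_span_mono: "F \<subseteq> G \<Longrightarrow> lin_span X F \<subseteq> lin_span X G"
  unfolding lin_span_def by blast

lemma lin_span_subspace: "fv.subspace (lin_span X F)"
proof (rule fv.subspaceI)
  show "0 \<in> lin_span X F"
    unfolding lin_span_def
    by (rule CollectI, rule exI[of _ 0], rule exI[of _ "\<lambda>_. 0"], rule exI[of _ "\<lambda>_. \<lambda>_. 0"])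
       (simp add: onX_def fun_eq_iff)
next
  fix f h assume f: "f \<in> lin_span X F" and h: "h \<in> lin_span X F"
  from f obtain k1 :: nat and c1 g1 where f1: "f = onX X (\<lambda>x. \<Sum>i<k1. c1 i * g1 i x)" "\<forall>i<k1. g1 i \<in> F"
    unfolding lin_span_def by blast
  from h obtain k2 :: nat and c2 g2 where h1: "h = onX X (\<lambda>x. \<Sum>i<k2. c2 i * g2 i x)" "\<forall>i<k2. g2 i \<in> F"
    unfolding lin_span_def by blast
  define c where "c = (\<lambda>i. if i < k1 then c1 i else c2 (i - k1))"
  define g where "g = (\<lambda>i. if i < k1 then g1 i else g2 (i - k1))"
  have "\<forall>i<k1+k2. g i \<in> F" using f1(2) h1(2) unfolding g_def by auto
  moreover have "f + h = onX X (\<lambda>x. \<Sum>i<k1+k2. c i * g i x)"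
    unfolding f1 h1 sum_split_add by (simp add: c_def g_def onX_def fun_eq_iff)
  ultimately show "f + h \<in> lin_span X F" unfolding lin_span_def by blast
next
  fix a f assume f: "f \<in> lin_span X F"
  from f obtain k1 :: nat and c1 g1 where f1: "f = onX X (\<lambda>x. \<Sum>i<k1. c1 i * g1 i x)" "\<forall>i<k1. g1 i \<in> F"
    unfolding lin_span_def by blast
  have "(\<lambda>x. a * f x) = onX X (\<lambda>x. \<Sum>i<k1. (a * c1 i) * g1 i x)"
    unfolding f1 by (simp add: onX_def fun_eq_iff sum_distrib_left mult.assoc)
  then show "(\<lambda>x. a * f x) \<in> lin_span X F" using f1(2) unfolding lin_span_def
    by (intro CollectI exI[of _ k1] exI[of _ "\<lambda>i. a * c1 i"] exI[of _ g1]) simp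
qed

lemma Pol_CX: "Pol X k \<subseteq> CX X"
  by (induction X k rule: Pol.induct) (simp_all add: lin_span_CX)

lemma Pol_subspace: "fv.subspace (Pol X k)"
  by (induction X k rule: Pol.induct) (simp_all add: lin_span_subspace)

lemma one_zeta: "(\<lambda>x::'a::real_inner. 1) \<in> {zeta a p | a p. degree p \<le> 1}"
proof -
  have "(\<lambda>x::'a. 1::real) = zeta (0::'a) [:1:] \<and> degree [:1::real:] \<le> 1" by (simp add: zeta_def fun_eq_iff)
  then show ?thesis by blast
qed

lemma one_Pol1: "onX X (\<lambda>x. 1) \<in> Pol X (Suc 0)"
proof -
  have "onX X (\<lambda>x. 1) \<in> lin_span X {zeta a p | a p. degree p \<le> 1}"
    by (rule lin_span_single[OF one_zeta])
  then show ?thesis by simp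
qed

lemma Pol_mono_Suc: "Pol X k \<subseteq> Pol X (Suc k)"
proof (cases k)
  case 0
  have sub: "{\<lambda>x. 1} \<subseteq> {zeta a p | a p. degree p \<le> 1}" using one_zeta by blast
  show ?thesis using 0 lin_span_mono[OF sub, of X] by simp
next
  case (Suc j)
  show ?thesis
  proof
    fix f assume f: "f \<in> Pol X k"
    have fC: "f \<in> CX X" using f Pol_CX by blast
    have eq: "(\<lambda>x. onX X (\<lambda>x. 1) x * f x) = f"
      using fC by (auto simp: onX_def CX_def fun_eq_iff)
    have "(\<lambda>x. onX X (\<lambda>x. 1) x * f x) \<in>
       {(\<lambda>x. f x * g x) | f g. f \<in> Pol X (Suc 0) \<and> g \<in> Pol X (Suc j)}"
      using one_Pol1[of X] f Suc by blast
    then have "onX X f \<in> Pol X (Suc (Suc j))" unfolding eq by (simp add: lin_span_single)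
    moreover have "onX X f = f" using fC by (auto simp: onX_def CX_def fun_eq_iff)
    ultimately show "f \<in> Pol X (Suc k)" using Suc by simp
  qed
qed

lemma Pol_mono: "i \<le> j \<Longrightarrow> Pol X i \<subseteq> Pol X j"
  by (induction j rule: dec_induct) (use Pol_mono_Suc in blast)+

lemma Harm_Pol: "Harm X k \<subseteq> Pol X k"
  by (cases k) auto

lemma Harm_CX: "Harm X k \<subseteq> CX X"
  using Harm_Pol Pol_CX by blast

lemma ipX_add_left: "ipX X (f + h) g = ipX X f g + ipX X h g"
  by (simp add: ipX_def distrib_right sum.distrib distrib_left)
lemma ipX_scale_left: "ipX X (\<lambda>x. a * f x) g = a * ipX X f g"
  by (simp add: ipX_def sum_distrib_left algebra_simps)

lemma Harm_subspace: "fv.subspace (Harm X k)"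
proof (cases k)
  case 0 then show ?thesis by (simp add: lin_span_subspace)
next
  case (Suc j)
  have P: "fv.subspace (Pol X (Suc j))" by (rule Pol_subspace)
  show ?thesis unfolding Suc
  proof (rule fv.subspaceI)
    show "0 \<in> Harm X (Suc j)" using P by (simp add: fv.subspace_0 ipX_def)
  next
    fix f h assume "f \<in> Harm X (Suc j)" "h \<in> Harm X (Suc j)"
    then show "f + h \<in> Harm X (Suc j)" using P by (simp add: fv.subspace_add ipX_add_left)
  next
    fix a f assume "f \<in> Harm X (Suc j)"
    then show "(\<lambda>x. a * f x) \<in> Harm X (Suc j)" using P by (simp add: fv.subspace_scale ipX_scale_left)
  qed
qed

lemma Harm_orth:
  assumes "finite X" "X \<noteq> {}" "i \<noteq> j" "f \<in> Harm X i" "h \<in> Harm X j"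
  shows "sp X f h = 0"
proof -
  have *: "sp X f h = 0" if ij: "i < j" and fi: "f \<in> Harm X i" and hj: "h \<in> Harm X j" for i j f h
  proof -
    obtain j' where j: "j = Suc j'" using ij by (cases j) auto
    have "f \<in> Pol X j'" using Harm_Pol[of X i] Pol_mono[of i j' X] fi ij j by auto
    then have "ipX X h f = 0" using hj j by simp
    then show ?thesis using ipX_zero_iff[OF assms(1,2)] sp_comm by metis
  qed
  show ?thesis
  proof (cases "i < j")
    case True then show ?thesis using * assms by blast
  next
    case False then have "j < i" using assms(3) by simp
    then show ?thesis using *[of j i h f] assms sp_comm by metis
  qed
qed


lemma CX_span_delta:
  assumes "finite X" shows "CX X \<subseteq> fv.span (delta ` X)"
proof
  fix f assume f: "f \<in> CX X"
  have eq: "f = (\<Sum>y\<in>X. (\<lambda>x. f y * delta y x))"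
  proof
    fix x show "f x = (\<Sum>y\<in>X. (\<lambda>x. f y * delta y x)) x"
      unfolding sum_fun_app using f assms
      by (cases "x \<in> X") (auto simp: delta_def CX_def if_distrib[of "\<lambda>t. f _ * t"] sum.delta cong: if_cong)
  qed
  have "(\<Sum>y\<in>X. (\<lambda>x. f y * delta y x)) \<in> fv.span (delta ` X)"
    by (rule fv.span_sum, rule fv.span_scale, rule fv.span_base) simp
  then show "f \<in> fv.span (delta ` X)" using eq by simp
qed

lemma subspace_fin_gen:
  assumes X: "finite X" and H: "fv.subspace H" "H \<subseteq> CX X"
  shows "\<exists>B. finite B \<and> B \<subseteq> H \<and> fv.span B = H"
proof -
  obtain B where B: "B \<subseteq> H" "fv.independent B" "H \<subseteq> fv.span B"
    using fv.maximal_independent_subset[of H] by blast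
  have "B \<subseteq> fv.span (delta ` X)" using B(1) H(2) CX_span_delta[OF X] by blast
  then have "finite B" using fv.independent_span_bound[of "delta ` X" B] B(2) X by blast
  moreover have "fv.span B = H" using fv.span_subspace[OF B(1) B(3) H(1)] .
  ultimately show ?thesis using B(1) by blast
qed

lemma gram_schmidt:
  assumes X: "finite X" "X \<noteq> {}"
  shows "finite B \<Longrightarrow> B \<subseteq> CX X \<Longrightarrow> \<exists>M. isproj X (fv.span B) M"
proof (induction B rule: finite_induct)
  case empty
  have "isproj X (fv.span {}) (\<lambda>x y. 0)"
    unfolding isproj_sp[OF X] by (simp add: matvec_def onX_def sp_def fun_eq_iff zero_fun_def)
  then show ?case by blast
next
  case (insert g B)
  from insert obtain M where M: "isproj X (fv.span B) M" by auto
  have gC: "g \<in> CX X" using insert by auto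
  define r where "r = (\<lambda>x. g x - matvec X M g x)"
  have rC: "r \<in> CX X" using gC matvec_CX[of X M g] unfolding r_def CX_def by auto
  have rorth: "sp X r v = 0" if "v \<in> fv.span B" for v
    unfolding r_def using isproj_orth[OF X M gC that] .
  have Mg: "matvec X M g \<in> fv.span B" using isproj_in[OF M gC] .
  have r_in: "r \<in> fv.span (insert g B)"
  proof -
    have "g - matvec X M g \<in> fv.span (insert g B)"
      by (rule fv.span_diff, rule fv.span_base, simp, rule set_mp[OF fv.span_mono Mg]) auto
    then show ?thesis unfolding r_def fun_diff_app .
  qed
  define N where "N = sp X r r"
  show ?case
  proof (cases "N = 0")
    case True
    then have r0: "\<forall>x\<in>X. r x = 0" using sp_self_zero[OF X(1)] unfolding N_def by blast
    have "g = matvec X M g"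
    proof
      fix x show "g x = matvec X M g x"
        using r0 gC matvec_CX[of X M g] unfolding r_def CX_def by (cases "x \<in> X") auto
    qed
    then have "g \<in> fv.span B" using Mg by simp
    then have "fv.span (insert g B) = fv.span B" by (rule fv.span_redundant)
    then show ?thesis using M by auto
  next
    case False
    define M' where "M' = (\<lambda>x y. M x y + r x * r y / N)"
    have mv: "matvec X M' f = (\<lambda>x. matvec X M f x + (sp X r f / N) * r x)" for f
    proof
      fix x show "matvec X M' f x = matvec X M f x + (sp X r f / N) * r x"
      proof (cases "x \<in> X")
        case True
        have "(\<Sum>y\<in>X. (M x y + r x * r y / N) * f y) = (\<Sum>y\<in>X. M x y * f y) + (\<Sum>y\<in>X. r y * f y) / N * r x"
          by (simp add: distrib_right sum.distrib sum_divide_distrib sum_distrib_left sum_distrib_right algebra_simps)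
        then show ?thesis using True by (simp add: matvec_def onX_def M'_def sp_def)
      next
        case False then show ?thesis using rC by (simp add: matvec_def onX_def CX_def)
      qed
    qed
    have "isproj X (fv.span (insert g B)) M'"
      unfolding isproj_sp[OF X]
    proof (intro conjI allI impI ballI)
      fix x y assume "\<not> (x \<in> X \<and> y \<in> X)"
      then show "M' x y = 0" using isproj_zero[OF M] rC unfolding M'_def CX_def by auto
    next
      fix f assume f: "f \<in> CX X"
      let ?c = "sp X r f / N"
      have Mf: "matvec X M f \<in> fv.span B" using isproj_in[OF M f] .
      have "matvec X M f + (\<lambda>x. ?c * r x) \<in> fv.span (insert g B)"
        by (rule fv.span_add[OF set_mp[OF fv.span_mono[OF subset_insertI] Mf] fv.span_scale[OF r_in]])
      then show "matvec X M' f \<in> fv.span (insert g B)" unfolding mv by (simp add: plus_fun_def)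
      define u where "u = (\<lambda>x. f x - matvec X M' f x)"
      have u_eq: "u = (\<lambda>x. (f x - matvec X M f x) - ?c * r x)" unfolding u_def mv by (simp add: fun_eq_iff)
      have uB: "sp X u v = 0" if v: "v \<in> fv.span B" for v
        unfolding u_eq sp_diff_left[of X "\<lambda>x. f x - matvec X M f x"] sp_scale_left
        using isproj_orth[OF X M f v] rorth[OF v] by simp
      have ur: "sp X u r = 0"
      proof -
        have "sp X u r = sp X f r - sp X (matvec X M f) r - ?c * N"
          unfolding u_eq sp_diff_left sp_scale_left N_def by simp
        also have "sp X (matvec X M f) r = 0" using rorth[OF Mf] sp_comm by metis
        finally show ?thesis using False sp_comm[of X f r] by simp
      qed
      have ug: "sp X u g = 0"
      proof -
        have "g = (\<lambda>x. r x + matvec X M g x)" unfolding r_def by simp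
        then have "sp X u g = sp X u r + sp X u (matvec X M g)"
          using sp_add_right[of X u r "matvec X M g"] by simp
        then show ?thesis using ur uB[OF Mg] by simp
      qed
      fix h assume h: "h \<in> fv.span (insert g B)"
      then obtain k where k: "h - (\<lambda>x. k * g x) \<in> fv.span B"
        using fv.span_breakdown_eq by blast
      define b where "b = h - (\<lambda>x. k * g x)"
      have hb: "h = (\<lambda>x. b x + k * g x)" unfolding b_def by (simp add: fun_eq_iff)
      have "sp X u h = sp X u b + k * sp X u g"
        unfolding hb sp_add_right sp_scale_right ..
      then show "sp X (\<lambda>x. f x - matvec X M' f x) h = 0"
        using uB[of b] k ug unfolding b_def u_def by simp
    qed
    then show ?thesis by blast
  qed
qed

lemma proj_exists:
  assumes X: "finite X" "X \<noteq> {}" and H: "fv.subspace H" "H \<subseteq> CX X"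
  shows "\<exists>M. isproj X H M"
proof -
  obtain B where B: "finite B" "B \<subseteq> H" "fv.span B = H" using subspace_fin_gen[OF X(1) H] by blast
  show ?thesis using gram_schmidt[OF X B(1)] B H(2) by auto
qed

lemma Fmat_isproj:
  assumes X: "finite X" "X \<noteq> {}"
  shows "isproj X (Harm X i) (Fmat X i)"
proof -
  obtain M where M: "isproj X (Harm X i) M" using proj_exists[OF X Harm_subspace Harm_CX] by blast
  have "\<exists>!M. isproj X (Harm X i) M"
    using M isproj_unique[OF X Harm_subspace] by blast
  then show ?thesis unfolding Fmat_def proj_mat_THE by (rule theI')
qed



lemma poly_nonzero_at_m:
  fixes A :: "real set" and W :: "real \<Rightarrow> real" and q :: "nat \<Rightarrow> real poly"
  assumes fin: "finite A" and cardA: "card A = Suc s" and Wpos: "\<forall>a\<in>A. W a > 0"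
    and deg: "degree (q k) = k" and ks: "k \<le> s" and qnz: "q k \<noteq> 0"
    and orth: "(\<Sum>a\<in>A. W a * poly (q k) a * poly (q k) a) = poly (q k) m"
  shows "poly (q k) m \<noteq> 0"
proof
  assume "poly (q k) m = 0"
  then have "(\<Sum>a\<in>A. W a * poly (q k) a * poly (q k) a) = 0" using orth by simp
  moreover have nn: "\<forall>a\<in>A. 0 \<le> W a * poly (q k) a * poly (q k) a"
  proof
    fix a assume a: "a \<in> A"
    have w: "0 \<le> W a" using Wpos a by (simp add: less_imp_le)
    have "0 \<le> W a * (poly (q k) a * poly (q k) a)"
      using mult_nonneg_nonneg[OF w zero_le_square] .
    then show "0 \<le> W a * poly (q k) a * poly (q k) a" by (simp add: mult.assoc)
  qed
  ultimately have z: "\<forall>a\<in>A. W a * poly (q k) a * poly (q k) a = 0"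
    using sum_nonneg_eq_0_iff[OF fin nn[rule_format]] by simp
  have "A \<subseteq> {x. poly (q k) x = 0}"
  proof
    fix a assume a: "a \<in> A"
    then have "W a * poly (q k) a * poly (q k) a = 0" using z by simp
    moreover have "0 < W a" using Wpos a by blast
    then have "W a \<noteq> 0" by simp
    ultimately show "a \<in> {x. poly (q k) x = 0}" by simp
  qed
  then have "card A \<le> card {x. poly (q k) x = 0}"
    using poly_roots_finite[OF qnz] by (rule card_mono[rotated])
  also have "\<dots> \<le> degree (q k)" by (rule card_poly_roots_bound[OF qnz])
  finally show False using cardA deg ks by simp
qed

lemma poly_span:
  fixes q :: "nat \<Rightarrow> real poly"
  assumes nz: "\<forall>k\<le>s. q k \<noteq> 0" and deg: "\<forall>k\<le>s. degree (q k) = k"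
  shows "d \<le> s \<Longrightarrow> degree p \<le> d \<Longrightarrow> \<exists>c. p = (\<Sum>i\<le>d. smult (c i) (q i))"
proof (induction d arbitrary: p)
  case 0
  have q0: "degree (q 0) = 0" "q 0 \<noteq> 0" using nz deg by auto
  then have cq: "coeff (q 0) 0 \<noteq> 0" using degree_0_id[OF q0(1)] by (metis pCons_0_0)
  have "p = smult (coeff p 0 / coeff (q 0) 0) (q 0)"
    using degree_0_id[OF q0(1)] degree_0_id[of p] 0 cq
    by (metis (no_types, lifting) bot_nat_0.extremum_uniqueI nonzero_divide_eq_eq smult_pCons smult_0_right)
  then show ?case by (intro exI[of _ "\<lambda>_. coeff p 0 / coeff (q 0) 0"]) simp
next
  case (Suc d)
  let ?Q = "q (Suc d)"
  have Qd: "degree ?Q = Suc d" "?Q \<noteq> 0" using nz deg Suc.prems by auto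
  have b: "coeff ?Q (Suc d) \<noteq> 0" using Qd by (metis leading_coeff_0_iff)
  define a where "a = coeff p (Suc d) / coeff ?Q (Suc d)"
  define p' where "p' = p - smult a ?Q"
  have "degree p' \<le> d"
  proof (rule degree_le, intro allI impI)
    fix i assume "d < i"
    show "coeff p' i = 0"
    proof (cases "i = Suc d")
      case True then show ?thesis using b by (simp add: p'_def a_def)
    next
      case False
      then have "Suc d < i" using \<open>d < i\<close> by simp
      then have "coeff p i = 0" "coeff ?Q i = 0" using Suc.prems Qd
        by (auto intro: coeff_eq_0)
      then show ?thesis by (simp add: p'_def)
    qed
  qed
  then obtain c where c: "p' = (\<Sum>i\<le>d. smult (c i) (q i))" using Suc by auto
  have "p = (\<Sum>i\<le>d. smult (c i) (q i)) + smult a ?Q" using c by (simp add: p'_def)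
  also have "\<dots> = (\<Sum>i\<le>Suc d. smult ((c(Suc d := a)) i) (q i))"
    by simp
  finally show ?case by blast
qed

lemma lagrange_exists:
  fixes A :: "real set"
  assumes fin: "finite A" and cardA: "card A = Suc s" and al: "\<alpha> \<in> A"
  shows "\<exists>p. degree p \<le> s \<and> (\<forall>b\<in>A. poly p b = (if b = \<alpha> then 1 else 0))"
proof -
  define L where "L = (\<Prod>b\<in>A - {\<alpha>}. [:- b, 1:])"
  have "degree L \<le> sum (degree \<circ> (\<lambda>b. [:- b, 1:])) (A - {\<alpha>})"
    unfolding L_def using fin by (intro degree_prod_sum_le) simp
  also have "\<dots> = card (A - {\<alpha>})" by simp
  also have "\<dots> = s" using cardA al fin by simp
  finally have dL: "degree L \<le> s" .
  have Lv: "poly L b = (\<Prod>c\<in>A - {\<alpha>}. b - c)" for b unfolding L_def poly_prod by simp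
  have La: "poly L \<alpha> \<noteq> 0" unfolding Lv using fin by simp
  have Lb: "poly L b = 0" if "b \<in> A" "b \<noteq> \<alpha>" for b
    unfolding Lv using fin that by (intro prod_zero) auto
  define p where "p = smult (1 / poly L \<alpha>) L"
  have "degree p \<le> s" using dL by (simp add: p_def)
  moreover have "\<forall>b\<in>A. poly p b = (if b = \<alpha> then 1 else 0)"
    using La Lb by (simp add: p_def)
  ultimately show ?thesis by blast
qed

lemma indicator_expansion:
  fixes A :: "real set" and q :: "nat \<Rightarrow> real poly"
  assumes fin: "finite A" and cardA: "card A = Suc s" and al: "\<alpha> \<in> A"
    and nz: "\<forall>k\<le>s. q k \<noteq> 0" and deg: "\<forall>k\<le>s. degree (q k) = k"
  shows "\<exists>c. \<forall>b\<in>A. (if b = \<alpha> then 1 else 0) = (\<Sum>i\<le>s. c i * poly (q i) b)"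
proof -
  obtain p where p: "degree p \<le> s" "\<forall>b\<in>A. poly p b = (if b = \<alpha> then 1 else 0)"
    using lagrange_exists[OF fin cardA al] by blast
  obtain c where c: "p = (\<Sum>i\<le>s. smult (c i) (q i))" using poly_span[OF nz deg le_refl p(1)] by blast
  have "\<forall>b\<in>A. (if b = \<alpha> then 1 else 0) = (\<Sum>i\<le>s. c i * poly (q i) b)"
    using p(2) unfolding c by (simp add: poly_sum)
  then show ?thesis by blast
qed

lemma identity_expansion:
  fixes A :: "real set" and q :: "nat \<Rightarrow> real poly" and W :: "real \<Rightarrow> real"
  assumes fin: "finite A" and cardA: "card A = Suc s" and mA: "m \<in> A"
    and nz: "\<forall>k\<le>s. q k \<noteq> 0" and deg: "\<forall>k\<le>s. degree (q k) = k"
    and mnz: "\<forall>k\<le>s. poly (q k) m \<noteq> 0"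
    and orth: "\<forall>k\<le>s. \<forall>h\<le>s. (\<Sum>a\<in>A. W a * poly (q k) a * poly (q h) a) = (if k = h then poly (q k) m else 0)"
  shows "\<forall>b\<in>A. (if b = m then 1 else 0) = (\<Sum>i\<le>s. W m * poly (q i) b)"
proof -
  obtain c where c: "\<forall>b\<in>A. (if b = m then 1 else 0) = (\<Sum>i\<le>s. c i * poly (q i) b)"
    using indicator_expansion[OF fin cardA mA nz deg] by blast
  have cj: "c j = W m" if j: "j \<le> s" for j
  proof -
    have "(\<Sum>b\<in>A. W b * (if b = m then 1 else 0) * poly (q j) b) = W m * poly (q j) m"
      using fin mA by (simp add: if_distrib[of "\<lambda>t. _ * t * _"] sum.delta' cong: if_cong)
    moreover have "(\<Sum>b\<in>A. W b * (if b = m then 1 else 0) * poly (q j) b)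
       = (\<Sum>b\<in>A. W b * (\<Sum>i\<le>s. c i * poly (q i) b) * poly (q j) b)"
      using c by (intro sum.cong) auto
    moreover have "\<dots> = (\<Sum>i\<le>s. c i * (\<Sum>b\<in>A. W b * poly (q i) b * poly (q j) b))"
      by (simp add: sum_distrib_left sum_distrib_right sum.swap[of _ A] algebra_simps)
    moreover have "\<dots> = (\<Sum>i\<le>s. c i * (if i = j then poly (q i) m else 0))"
      using orth j by (intro sum.cong) auto
    moreover have "\<dots> = c j * poly (q j) m" using j by (simp add: if_distrib[of "\<lambda>t. _ * t"] sum.delta' cong: if_cong)
    ultimately have "c j * poly (q j) m = W m * poly (q j) m" by simp
    then show ?thesis using mnz j by simp
  qed
  show ?thesis using c cj by simp
qed



lemma sphere_eq:
  fixes X :: "'a::euclidean_space set"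
  assumes "on_sphere X" "x \<in> X" "y \<in> X" "x \<bullet> y = real DIM('a)"
  shows "x = y"
proof -
  have xx: "x \<bullet> x = real DIM('a)" "y \<bullet> y = real DIM('a)" using assms(1-3) unfolding on_sphere_def by auto
  have "(x - y) \<bullet> (x - y) = x \<bullet> x - 2 * (x \<bullet> y) + y \<bullet> y"
    by (simp add: inner_diff_left inner_diff_right inner_commute)
  also have "\<dots> = 0" using xx assms(4) by simp
  finally show ?thesis by simp
qed

lemma inner_Aset':
  fixes X :: "'a::euclidean_space set"
  assumes "on_sphere X" "x \<in> X" "y \<in> X" shows "x \<bullet> y \<in> Aset' X"
proof (cases "x = y")
  case True then show ?thesis using assms unfolding on_sphere_def Aset'_def by simp
next
  case False then show ?thesis using assms unfolding Aset'_def Aset_def by blast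
qed

lemma finite_Aset: "finite X \<Longrightarrow> finite (Aset X)"
proof -
  assume "finite X"
  have sub: "Aset X \<subseteq> (\<lambda>(x, y). x \<bullet> y) ` (X \<times> X)" unfolding Aset_def by force
  show ?thesis by (rule finite_subset[OF sub]) (simp add: \<open>finite X\<close>)
qed

lemma finite_Aset': "finite X \<Longrightarrow> finite (Aset' X)"
  unfolding Aset'_def using finite_Aset by simp

lemma m_notin_Aset:
  fixes X :: "'a::euclidean_space set"
  assumes "on_sphere X" shows "real DIM('a) \<notin> Aset X"
proof
  assume "real DIM('a) \<in> Aset X"
  then obtain x y where xy: "real DIM('a) = x \<bullet> y" "x \<in> X" "y \<in> X" "x \<noteq> y"
    unfolding Aset_def by blast
  then show False using sphere_eq[OF assms, of x y] by simp
qed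

lemma card_Aset':
  fixes X :: "'a::euclidean_space set"
  assumes "finite X" "on_sphere X" shows "card (Aset' X) = Suc (card (Aset X))"
  unfolding Aset'_def using finite_Aset[OF assms(1)] m_notin_Aset[OF assms(2)] by simp

lemma ne_imp_nonempty_helper: "a \<in> S \<Longrightarrow> S \<noteq> {}" by blast

lemma kappa_pos:
  fixes X :: "'a::euclidean_space set"
  assumes "finite X" "X \<noteq> {}" "on_sphere X" "\<alpha> \<in> Aset' X"
  shows "kappa X \<alpha> > 0"
proof -
  have fin: "finite {(x, y). x \<in> X \<and> y \<in> X \<and> x \<bullet> y = \<alpha>}"
    by (rule finite_subset[of _ "X \<times> X"]) (use assms(1) in auto)
  have "{(x, y). x \<in> X \<and> y \<in> X \<and> x \<bullet> y = \<alpha>} \<noteq> {}"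
  proof (cases "\<alpha> = real DIM('a)")
    case True
    obtain x where "x \<in> X" using assms(2) by blast
    then have "(x, x) \<in> {(x, y). x \<in> X \<and> y \<in> X \<and> x \<bullet> y = \<alpha>}"
      using assms(3) True unfolding on_sphere_def by simp
    then show ?thesis by blast
  next
    case False
    then have "\<alpha> \<in> Aset X" using assms(4) unfolding Aset'_def by simp
    then obtain x y where xy: "\<alpha> = x \<bullet> y" "x \<in> X" "y \<in> X" unfolding Aset_def by blast
    then have "(x, y) \<in> {(x, y). x \<in> X \<and> y \<in> X \<and> x \<bullet> y = \<alpha>}" by simp
    then show ?thesis by (rule ne_imp_nonempty_helper)
  qed
  then show ?thesis unfolding kappa_def using fin by (simp add: card_gt_0_iff)
qed

lemma kappa_m:
  fixes X :: "'a::euclidean_space set"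
  assumes "finite X" "on_sphere X"
  shows "kappa X (real DIM('a)) = card X"
proof -
  have "{(x, y). x \<in> X \<and> y \<in> X \<and> x \<bullet> y = real DIM('a)} = (\<lambda>x. (x, x)) ` X"
  proof (intro equalityI subsetI)
    fix p assume "p \<in> {(x, y). x \<in> X \<and> y \<in> X \<and> x \<bullet> y = real DIM('a)}"
    then obtain x y where p: "p = (x, y)" "x \<in> X" "y \<in> X" "x \<bullet> y = real DIM('a)" by blast
    then have "x = y" using sphere_eq[OF assms(2)] by blast
    then show "p \<in> (\<lambda>x. (x, x)) ` X" using p by simp
  next
    fix p assume "p \<in> (\<lambda>x. (x, x)) ` X"
    then obtain x where p: "p = (x, x)" "x \<in> X" by blast
    then show "p \<in> {(x, y). x \<in> X \<and> y \<in> X \<and> x \<bullet> y = real DIM('a)}"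
      using assms(2) unfolding on_sphere_def by simp
  qed
  moreover have "card ((\<lambda>x. (x, x)) ` X) = card X" by (rule card_image) (simp add: inj_on_def)
  ultimately show ?thesis unfolding kappa_def by simp
qed

lemma card_as_sum:
  assumes "finite X"
  shows "real (card {z \<in> X. P z}) = (\<Sum>z\<in>X. if P z then 1 else 0)"
  using sum.inter_filter[OF assms, of "\<lambda>_. 1::real" P] by simp


lemma Fmat_zero: "finite X \<Longrightarrow> X \<noteq> {} \<Longrightarrow> \<not> (x \<in> X \<and> y \<in> X) \<Longrightarrow> Fmat X i x y = 0"
  using isproj_zero[OF Fmat_isproj] by blast

lemma Fmat_mult:
  assumes X: "finite X" "X \<noteq> {}" and x: "x \<in> X" and y: "y \<in> X"
  shows "matmul X (Fmat X i) (Fmat X j) x y = (if i = j then Fmat X i x y else 0)"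
proof -
  let ?v = "matvec X (Fmat X j) (delta y)"
  have vH: "?v \<in> Harm X j" using isproj_in[OF Fmat_isproj[OF X] delta_CX[OF y]] .
  have vC: "?v \<in> CX X" by (rule matvec_CX)
  have vy: "?v z = Fmat X j z y" if "z \<in> X" for z using matvec_delta[OF X(1) y] that by simp
  have mm: "matmul X (Fmat X i) (Fmat X j) x y = matvec X (Fmat X i) ?v x"
  proof -
    have "matvec X (Fmat X i) ?v x = (\<Sum>z\<in>X. Fmat X i x z * ?v z)"
      using x by (simp add: matvec_def onX_def)
    also have "\<dots> = (\<Sum>z\<in>X. Fmat X i x z * Fmat X j z y)"
      by (rule sum.cong) (simp_all add: vy)
    finally show ?thesis by (simp add: matmul_def)
  qed
  show ?thesis
  proof (cases "i = j")
    case True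
    have "matvec X (Fmat X i) ?v = ?v"
      using isproj_fix[OF X Harm_subspace Harm_CX Fmat_isproj[OF X] ] vH True by simp
    then show ?thesis using mm vy[OF x] True by simp
  next
    case False
    have "\<forall>h\<in>Harm X i. sp X ?v h = 0" using Harm_orth[OF X, of j i ?v] vH False by auto
    then have "matvec X (Fmat X i) ?v = 0" using isproj_kill[OF X Fmat_isproj[OF X] vC] by blast
    then show ?thesis using mm False by simp
  qed
qed

lemma F0_nonzero:
  assumes X: "finite X" "X \<noteq> {}"
  shows "\<exists>x\<in>X. \<exists>y\<in>X. Fmat X 0 x y \<noteq> 0"
proof (rule ccontr)
  assume nz: "\<not> (\<exists>x\<in>X. \<exists>y\<in>X. Fmat X 0 x y \<noteq> 0)"
  let ?e = "onX X (\<lambda>x. 1)"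
  have "?e \<in> lin_span X {\<lambda>x. 1}" by (rule lin_span_single) simp
  then have eH: "?e \<in> Harm X 0" by simp
  have fx: "matvec X (Fmat X 0) ?e = ?e"
    using isproj_fix[OF X Harm_subspace Harm_CX Fmat_isproj[OF X] eH] .
  obtain x0 where x0: "x0 \<in> X" using X(2) by blast
  have "matvec X (Fmat X 0) ?e x0 = (\<Sum>y\<in>X. Fmat X 0 x0 y * ?e y)"
    using x0 by (simp add: matvec_def onX_def)
  also have "\<dots> = 0" using nz x0 by (intro sum.neutral) auto
  finally have "?e x0 = 0" using fx by simp
  then show False using x0 by (simp add: onX_def)
qed

theorem lemma3p6:
  fixes X :: "'a::euclidean_space set" and s :: nat and q :: "nat \<Rightarrow> real poly"
  assumes "finite X" and "X \<noteq> {}"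
    and "on_sphere X"
    and "design2 X"
    and "card (Aset X) = s"
    and "design_degree X = s"
    and "predegree_polys X s q"
    and "\<forall>i\<le>s. \<forall>x\<in>X. \<forall>y\<in>X.
           (1 / real (card X)) * poly (q i) (real (card X) * ((1 / real (card X)) * (x \<bullet> y)))
           = Fmat X i x y"
  shows "Q_poly_scheme X (Fmat X) s"
proof -
  note fin = assms(1) and ne = assms(2) and sph = assms(3)
  have X: "finite X" "X \<noteq> {}" using assms(1,2) by auto
  let ?n = "real (card X)"
  let ?m = "real DIM('a)"
  let ?A = "Aset' X"
  define R where "R = (\<lambda>\<alpha>. {(x, y). x \<in> X \<and> y \<in> X \<and> x \<bullet> y = \<alpha>})"
  have n0: "?n > 0" using X by (simp add: card_gt_0_iff)
  have Fq: "Fmat X i x y = poly (q i) (x \<bullet> y) / ?n" if "i \<le> s" "x \<in> X" "y \<in> X" for i x y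
  proof -
    have h: "(1 / ?n) * poly (q i) (?n * ((1 / ?n) * (x \<bullet> y))) = Fmat X i x y"
      using assms(8) that by blast
    have eq: "?n * ((1 / ?n) * (x \<bullet> y)) = x \<bullet> y" using n0 by simp
    show ?thesis using h unfolding eq by simp
  qed
  have finA: "finite ?A" using finite_Aset'[OF fin] .
  have cardA: "card ?A = Suc s" using card_Aset'[OF fin sph] assms(5) by simp
  have mA: "?m \<in> ?A" unfolding Aset'_def by simp
  have inA: "x \<bullet> y \<in> ?A" if "x \<in> X" "y \<in> X" for x y using inner_Aset'[OF sph that] .
  define W where "W = (\<lambda>\<alpha>. real (kappa X \<alpha>) / ?n^2)"
  have Wpos: "\<forall>a\<in>?A. W a > 0"
  proof
    fix a assume "a \<in> ?A"
    then have "kappa X a > 0" using kappa_pos[OF fin ne sph] by blast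
    then show "W a > 0" unfolding W_def using n0 by simp
  qed
  have Wm: "W ?m = 1 / ?n" unfolding W_def kappa_m[OF fin sph] using n0 by (simp add: power2_eq_square)
  have deg: "\<forall>k\<le>s. degree (q k) = k" using assms(7) unfolding predegree_polys_def by blast
  have orth: "\<forall>k\<le>s. \<forall>h\<le>s. (\<Sum>a\<in>?A. W a * poly (q k) a * poly (q h) a) = (if k = h then poly (q k) ?m else 0)"
  proof (intro allI impI)
    fix k h assume kh: "k \<le> s" "h \<le> s"
    then have "pre_ip X (q k) (q h) = (if k = h then poly (q k) ?m else 0)"
      using assms(7) unfolding predegree_polys_def by blast
    moreover have "pre_ip X (q k) (q h) = (\<Sum>a\<in>?A. W a * poly (q k) a * poly (q h) a)"
      unfolding pre_ip_def W_def sum_distrib_left by (intro sum.cong refl) simp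
    ultimately show "(\<Sum>a\<in>?A. W a * poly (q k) a * poly (q h) a) = (if k = h then poly (q k) ?m else 0)"
      by simp
  qed
  have F0nz: "\<exists>x\<in>X. \<exists>y\<in>X. Fmat X 0 x y \<noteq> 0" using F0_nonzero[OF X] .
  have nz: "\<forall>k\<le>s. q k \<noteq> 0"
  proof (intro allI impI)
    fix k assume k: "k \<le> s"
    show "q k \<noteq> 0"
    proof
      assume qk: "q k = 0"
      then have "degree (q k) = 0" by simp
      then have k0: "k = 0" using deg k by simp
      have "\<forall>x\<in>X. \<forall>y\<in>X. Fmat X 0 x y = 0" using Fq[of 0] qk k0 by simp
      then show False using F0nz by blast
    qed
  qed
  have mnz: "\<forall>k\<le>s. poly (q k) ?m \<noteq> 0"
  proof (intro allI impI)
    fix k assume k: "k \<le> s"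
    have o: "(\<Sum>a\<in>?A. W a * poly (q k) a * poly (q k) a) = poly (q k) ?m" using orth k by simp
    have d: "degree (q k) = k" and qn: "q k \<noteq> 0" using deg nz k by auto
    show "poly (q k) ?m \<noteq> 0"
      by (rule poly_nonzero_at_m[where q=q and k=k, OF finA cardA Wpos d k qn o])
  qed
  have idexp: "\<forall>b\<in>?A. (if b = ?m then 1 else 0) = (\<Sum>i\<le>s. W ?m * poly (q i) b)"
    by (rule identity_expansion[OF finA cardA mA nz deg mnz orth])
  have Fsum: "(\<Sum>i\<le>s. Fmat X i x y) = (if x = y then 1 else 0)" if xy: "x \<in> X" "y \<in> X" for x y
  proof -
    have "(\<Sum>i\<le>s. Fmat X i x y) = (\<Sum>i\<le>s. W ?m * poly (q i) (x \<bullet> y))"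
      using Fq xy unfolding Wm by (intro sum.cong refl) simp
    also have "\<dots> = (if x \<bullet> y = ?m then 1 else 0)" using idexp inA[OF xy] by simp
    also have "\<dots> = (if x = y then 1 else 0)"
      using sphere_eq[OF sph xy] sph xy unfolding on_sphere_def by auto
    finally show ?thesis .
  qed
  have adjR: "adj (R \<alpha>) x y = (if x \<bullet> y = \<alpha> then 1 else 0)" if "x \<in> X" "y \<in> X" for \<alpha> x y
    using that unfolding adj_def R_def by simp
  have adjF: "\<exists>c. \<forall>x\<in>X. \<forall>y\<in>X. adj (R \<alpha>) x y = (\<Sum>i\<le>s. c i * Fmat X i x y)" if al: "\<alpha> \<in> ?A" for \<alpha>
  proof -
    obtain c where c: "\<forall>b\<in>?A. (if b = \<alpha> then 1 else 0) = (\<Sum>i\<le>s. c i * poly (q i) b)"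
      using indicator_expansion[OF finA cardA al nz deg] by blast
    have "\<forall>x\<in>X. \<forall>y\<in>X. adj (R \<alpha>) x y = (\<Sum>i\<le>s. (?n * c i) * Fmat X i x y)"
    proof (intro ballI)
      fix x y assume xy: "x \<in> X" "y \<in> X"
      have "adj (R \<alpha>) x y = (\<Sum>i\<le>s. c i * poly (q i) (x \<bullet> y))"
        using adjR[OF xy] c inA[OF xy] by simp
      also have "\<dots> = (\<Sum>i\<le>s. (?n * c i) * Fmat X i x y)"
        using Fq xy n0 by (intro sum.cong refl) simp
      finally show "adj (R \<alpha>) x y = (\<Sum>i\<le>s. (?n * c i) * Fmat X i x y)" .
    qed
    then show ?thesis by (intro exI[of _ "\<lambda>i. ?n * c i"])
  qed
  have inter: "\<exists>p::nat. \<forall>(x, y)\<in>R \<gamma>. card {z\<in>X. (x, z) \<in> R \<alpha> \<and> (z, y) \<in> R \<beta>} = p"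
    if abg: "\<alpha> \<in> ?A" "\<beta> \<in> ?A" "\<gamma> \<in> ?A" for \<alpha> \<beta> \<gamma>
  proof -
    obtain a where a: "\<forall>x\<in>X. \<forall>y\<in>X. adj (R \<alpha>) x y = (\<Sum>i\<le>s. a i * Fmat X i x y)"
      using adjF[OF abg(1)] by blast
    obtain b where b: "\<forall>x\<in>X. \<forall>y\<in>X. adj (R \<beta>) x y = (\<Sum>i\<le>s. b i * Fmat X i x y)"
      using adjF[OF abg(2)] by blast
    define V where "V = (\<Sum>i\<le>s. a i * b i * (poly (q i) \<gamma> / ?n))"
    have cV: "real (card {z\<in>X. (x, z) \<in> R \<alpha> \<and> (z, y) \<in> R \<beta>}) = V" if xy: "(x, y) \<in> R \<gamma>" for x y
    proof -
      have x: "x \<in> X" and y: "y \<in> X" and g: "x \<bullet> y = \<gamma>" using xy unfolding R_def by auto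
      have "real (card {z\<in>X. (x, z) \<in> R \<alpha> \<and> (z, y) \<in> R \<beta>})
          = (\<Sum>z\<in>X. if (x, z) \<in> R \<alpha> \<and> (z, y) \<in> R \<beta> then 1 else 0)"
        by (rule card_as_sum[OF fin])
      also have "\<dots> = (\<Sum>z\<in>X. adj (R \<alpha>) x z * adj (R \<beta>) z y)"
        by (intro sum.cong refl) (simp add: adj_def)
      also have "\<dots> = (\<Sum>z\<in>X. (\<Sum>i\<le>s. a i * Fmat X i x z) * (\<Sum>j\<le>s. b j * Fmat X j z y))"
        using a b x y by (intro sum.cong refl) simp
      also have "\<dots> = (\<Sum>z\<in>X. \<Sum>i\<le>s. \<Sum>j\<le>s. a i * b j * (Fmat X i x z * Fmat X j z y))"
        by (intro sum.cong refl) (simp add: sum_product mult_ac)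
      also have "\<dots> = (\<Sum>i\<le>s. \<Sum>z\<in>X. \<Sum>j\<le>s. a i * b j * (Fmat X i x z * Fmat X j z y))"
        by (rule sum.swap)
      also have "\<dots> = (\<Sum>i\<le>s. \<Sum>j\<le>s. \<Sum>z\<in>X. a i * b j * (Fmat X i x z * Fmat X j z y))"
        by (intro sum.cong refl) (rule sum.swap)
      also have "\<dots> = (\<Sum>i\<le>s. \<Sum>j\<le>s. a i * b j * matmul X (Fmat X i) (Fmat X j) x y)"
        by (simp add: matmul_def sum_distrib_left)
      also have "\<dots> = (\<Sum>i\<le>s. a i * b i * Fmat X i x y)"
      proof (intro sum.cong refl)
        fix i assume i: "i \<in> {..s}"
        have "(\<Sum>j\<le>s. a i * b j * matmul X (Fmat X i) (Fmat X j) x y)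
            = (\<Sum>j\<le>s. if i = j then a i * b j * Fmat X i x y else 0)"
          using Fmat_mult[OF X x y] by (intro sum.cong refl) simp
        also have "\<dots> = a i * b i * Fmat X i x y" using i by (simp add: sum.delta sum.delta')
        finally show "(\<Sum>j\<le>s. a i * b j * matmul X (Fmat X i) (Fmat X j) x y) = a i * b i * Fmat X i x y" .
      qed
      also have "\<dots> = V" unfolding V_def using Fq x y g by (intro sum.cong refl) simp
      finally show ?thesis .
    qed
    show ?thesis
    proof (cases "R \<gamma> = {}")
      case True then show ?thesis by simp
    next
      case False
      then obtain x0 y0 where p0: "(x0, y0) \<in> R \<gamma>" by auto
      have "\<forall>(x, y)\<in>R \<gamma>. card {z\<in>X. (x, z) \<in> R \<alpha> \<and> (z, y) \<in> R \<beta>}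
              = card {z\<in>X. (x0, z) \<in> R \<alpha> \<and> (z, y0) \<in> R \<beta>}"
      proof (intro ballI, clarify)
        fix x y assume "(x, y) \<in> R \<gamma>"
        then have "real (card {z\<in>X. (x, z) \<in> R \<alpha> \<and> (z, y) \<in> R \<beta>})
              = real (card {z\<in>X. (x0, z) \<in> R \<alpha> \<and> (z, y0) \<in> R \<beta>})"
          using cV[OF p0] cV by simp
        then show "card {z\<in>X. (x, z) \<in> R \<alpha> \<and> (z, y) \<in> R \<beta>}
              = card {z\<in>X. (x0, z) \<in> R \<alpha> \<and> (z, y0) \<in> R \<beta>}" by (simp only: of_nat_eq_iff)
      qed
      then show ?thesis by blast
    qed
  qed
  have qpoly: "\<forall>i\<le>s. \<exists>v. degree v = i \<and> (\<forall>x\<in>X. \<forall>y\<in>X. ?n * Fmat X i x y = poly v (?n * Fmat X 1 x y))"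
  proof (intro allI impI)
    fix i assume i: "i \<le> s"
    have nF: "?n * Fmat X k x y = poly (q k) (x \<bullet> y)" if "k \<le> s" "x \<in> X" "y \<in> X" for k x y
      using Fq[OF that] n0 by simp
    show "\<exists>v. degree v = i \<and> (\<forall>x\<in>X. \<forall>y\<in>X. ?n * Fmat X i x y = poly v (?n * Fmat X 1 x y))"
    proof (cases "i = 0")
      case True
      have d0: "degree (q 0) = 0" using deg by simp
      have pc: "poly (q 0) t = coeff (q 0) 0" for t
        by (subst degree_0_id[OF d0, symmetric]) simp
      have "\<forall>x\<in>X. \<forall>y\<in>X. ?n * Fmat X 0 x y = poly (q 0) (?n * Fmat X 1 x y)"
        using nF[of 0] pc by simp
      then show ?thesis using True d0 by blast
    next
      case False
      then have s1: "1 \<le> s" using i by simp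
      define a where "a = coeff (q 1) 0"
      define b where "b = coeff (q 1) 1"
      have d1: "degree (q 1) = 1" using deg s1 by simp
      have b0: "b \<noteq> 0" unfolding b_def using d1 leading_coeff_0_iff[of "q 1"] by auto
      have q1: "poly (q 1) t = a + b * t" for t
        unfolding a_def b_def poly_altdef d1 by simp
      define r where "r = [:- a / b, 1 / b:]"
      have dr: "degree r = 1" unfolding r_def using b0 by simp
      have pr: "poly r (a + b * t) = t" for t unfolding r_def using b0 by (simp add: field_simps)
      define v where "v = pcompose (q i) r"
      have "degree v = i" unfolding v_def degree_pcompose dr using deg i by simp
      moreover have "\<forall>x\<in>X. \<forall>y\<in>X. ?n * Fmat X i x y = poly v (?n * Fmat X 1 x y)"
        using nF i s1 q1 pr by (simp add: v_def poly_pcompose)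
      ultimately show ?thesis by blast
    qed
  qed
  have Rne: "R \<alpha> \<noteq> {}" if "\<alpha> \<in> ?A" for \<alpha>
  proof -
    have "kappa X \<alpha> > 0" using kappa_pos[OF fin ne sph that] .
    then have "card (R \<alpha>) > 0" unfolding kappa_def R_def by simp
    then show ?thesis by auto
  qed
  have Rm: "R ?m = Id_on X"
  proof (intro equalityI subsetI)
    fix p assume "p \<in> R ?m"
    then obtain x y where p: "p = (x, y)" "x \<in> X" "y \<in> X" "x \<bullet> y = ?m" unfolding R_def by blast
    then have "x = y" using sphere_eq[OF sph] by blast
    then show "p \<in> Id_on X" using p by (simp add: Id_on_def)
  next
    fix p assume "p \<in> Id_on X"
    then obtain x where p: "p = (x, x)" "x \<in> X" by (auto simp: Id_on_def)
    then show "p \<in> R ?m" using sph unfolding R_def on_sphere_def by simp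
  qed
  have Runion: "(\<Union>i\<in>?A. R i) = X \<times> X"
  proof (intro equalityI subsetI)
    fix p assume "p \<in> (\<Union>i\<in>?A. R i)"
    then show "p \<in> X \<times> X" unfolding R_def by auto
  next
    fix p assume "p \<in> X \<times> X"
    then obtain x y where p: "p = (x, y)" "x \<in> X" "y \<in> X" by auto
    then have "p \<in> R (x \<bullet> y)" unfolding R_def by simp
    then show "p \<in> (\<Union>i\<in>?A. R i)" using inA[OF p(2,3)] by blast
  qed
  have sas: "sym_assoc_scheme X ?A R"
    unfolding sym_assoc_scheme_def
  proof (intro conjI)
    show "finite X" by (rule fin)
    show "finite ?A" by (rule finA)
    show "\<forall>i\<in>?A. R i \<noteq> {} \<and> R i \<subseteq> X \<times> X" using Rne unfolding R_def by auto
    show "\<forall>i\<in>?A. \<forall>j\<in>?A. i \<noteq> j \<longrightarrow> R i \<inter> R j = {}" unfolding R_def by auto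
    show "(\<Union>i\<in>?A. R i) = X \<times> X" by (rule Runion)
    show "\<exists>i0\<in>?A. R i0 = Id_on X" using Rm mA by blast
    show "\<forall>i\<in>?A. converse (R i) = R i" unfolding R_def by (auto simp: inner_commute)
    show "\<forall>i\<in>?A. \<forall>j\<in>?A. \<forall>k\<in>?A. \<exists>p::nat. \<forall>(x, y)\<in>R k. card {z\<in>X. (x, z) \<in> R i \<and> (z, y) \<in> R j} = p"
      using inter by blast
  qed
  have pidem: "primitive_idempotents X ?A R (Fmat X) s"
    unfolding primitive_idempotents_def
  proof (intro conjI)
    show "\<forall>i\<le>s. \<exists>c. \<forall>x\<in>X. \<forall>y\<in>X. Fmat X i x y = (\<Sum>\<alpha>\<in>?A. c \<alpha> * adj (R \<alpha>) x y)"
    proof (intro allI impI)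
      fix i assume i: "i \<le> s"
      have "\<forall>x\<in>X. \<forall>y\<in>X. Fmat X i x y = (\<Sum>\<alpha>\<in>?A. (poly (q i) \<alpha> / ?n) * adj (R \<alpha>) x y)"
      proof (intro ballI)
        fix x y assume xy: "x \<in> X" "y \<in> X"
        have "(\<Sum>\<alpha>\<in>?A. (poly (q i) \<alpha> / ?n) * adj (R \<alpha>) x y)
            = (\<Sum>\<alpha>\<in>?A. if x \<bullet> y = \<alpha> then poly (q i) \<alpha> / ?n else 0)"
          using adjR[OF xy] by (intro sum.cong refl) simp
        also have "\<dots> = poly (q i) (x \<bullet> y) / ?n" using inA[OF xy] finA by (simp add: sum.delta')
        finally show "Fmat X i x y = (\<Sum>\<alpha>\<in>?A. (poly (q i) \<alpha> / ?n) * adj (R \<alpha>) x y)"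
          using Fq[OF i xy] by simp
      qed
      then show "\<exists>c. \<forall>x\<in>X. \<forall>y\<in>X. Fmat X i x y = (\<Sum>\<alpha>\<in>?A. c \<alpha> * adj (R \<alpha>) x y)"
        by (intro exI[of _ "\<lambda>\<alpha>. poly (q i) \<alpha> / ?n"])
    qed
    show "\<forall>i\<le>s. \<exists>x\<in>X. \<exists>y\<in>X. Fmat X i x y \<noteq> 0"
    proof (intro allI impI)
      fix i assume i: "i \<le> s"
      obtain x0 where x0: "x0 \<in> X" using ne by blast
      have "x0 \<bullet> x0 = ?m" using sph x0 unfolding on_sphere_def by simp
      then have "Fmat X i x0 x0 = poly (q i) ?m / ?n" using Fq[OF i x0 x0] by simp
      then have "Fmat X i x0 x0 \<noteq> 0" using mnz i n0 by simp
      then show "\<exists>x\<in>X. \<exists>y\<in>X. Fmat X i x y \<noteq> 0" using x0 by blast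
    qed
    show "\<forall>i\<le>s. \<forall>j\<le>s. \<forall>x\<in>X. \<forall>y\<in>X.
         matmul X (Fmat X i) (Fmat X j) x y = (if i = j then Fmat X i x y else 0)"
      using Fmat_mult[OF X] by blast
    show "\<forall>x\<in>X. \<forall>y\<in>X. (\<Sum>i\<le>s. Fmat X i x y) = (if x = y then 1 else 0)"
      using Fsum by blast
    show "\<forall>\<alpha>\<in>?A. \<exists>c. \<forall>x\<in>X. \<forall>y\<in>X. adj (R \<alpha>) x y = (\<Sum>i\<le>s. c i * Fmat X i x y)"
      using adjF by blast
  qed
  show ?thesis unfolding Q_poly_scheme_def Let_def R_def[symmetric]
    using sas pidem qpoly by blast
qed

end
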